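(* Let $X$ be a completely regular space and $G$ an infinite open subset of $X$. Then there exist a sequence $(x_n)_{n=1}^\infty$ in $G$ and a continuous function $f:X\to[-1,1]$ such that $\operatorname{supp}f\subseteq G$, $f(x_{2k-1})=\frac1k$ and $f(x_{2k})=-\frac1k$ for all $k\in\mathbb N$.
   Context: Completely regular spaces are assumed $T_1$. For $f:X\to\mathbb R$, $\operatorname{supp}f=\{x\in X:f(x)\ne0\}$. *)

theory Defs
  imports "HOL-Analysis.Analysis"
begin

end

theory Submission
  imports Defs
begin

lemma step_split:
  assumes H: "Hausdorff_space X" and T: "t1_space X"
    and W: "openin X W" "infinite W"
  shows "\<exists>U W'. openin X U \<and> U \<noteq> {} \<and> openin X W' \<and> infinite W' \<and> U \<subseteq> W \<and> W' \<subseteq> W \<and> U \<inter> W' = {}"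
proof -
  obtain a where a: "a \<in> W" using W(2) by (metis ex_in_conv finite.emptyI)
  have "infinite (W - {a})" using W(2) by simp
  then obtain b where b: "b \<in> W" "b \<noteq> a" by (metis Diff_iff ex_in_conv finite.emptyI insertI1)
  have WX: "W \<subseteq> topspace X" using W(1) openin_subset by blast
  have "a \<in> topspace X" "b \<in> topspace X" using a b WX by blast+
  then obtain A B where AB: "openin X A" "openin X B" "a \<in> A" "b \<in> B" "disjnt A B"
    using H b(2) unfolding Hausdorff_space_def by metis
  show ?thesis
  proof (cases "infinite (W \<inter> A)")
    case True
    have "openin X (W \<inter> B)" using W(1) AB(2) by (rule openin_Int)
    moreover have "openin X (W \<inter> A)" using W(1) AB(1) by (rule openin_Int)
    moreover have "W \<inter> B \<noteq> {}" using b AB(4) by blast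
    moreover have "(W \<inter> B) \<inter> (W \<inter> A) = {}" using AB(5) unfolding disjnt_def by blast
    ultimately show ?thesis using True by blast
  next
    case False
    have cl: "closedin X (W \<inter> A)" using False T WX t1_space_closedin_finite by blast
    have "openin X (W - (W \<inter> A))" using W(1) cl by (rule openin_diff)
    moreover have "infinite (W - (W \<inter> A))" using False W(2) by simp
    moreover have "openin X (W \<inter> A)" using W(1) AB(1) by (rule openin_Int)
    moreover have "W \<inter> A \<noteq> {}" using a AB(3) by blast
    moreover have "(W \<inter> A) \<inter> (W - (W \<inter> A)) = {}" by blast
    ultimately show ?thesis by blast
  qed
qed

definition glue :: "(nat \<Rightarrow> real) \<Rightarrow> (nat \<Rightarrow> 'a \<Rightarrow> real) \<Rightarrow> 'a \<Rightarrow> real" where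
  "glue c g y = (if \<exists>n. g n y \<noteq> 0 then c (SOME n. g n y \<noteq> 0) * g (SOME n. g n y \<noteq> 0) y else 0)"

lemma glue_val:
  assumes dis: "\<And>n m. g n y \<noteq> 0 \<Longrightarrow> g m y \<noteq> 0 \<Longrightarrow> n = m" and nz: "g n y \<noteq> 0"
  shows "glue c g y = c n * g n y"
proof -
  have "g (SOME n. g n y \<noteq> 0) y \<noteq> 0" by (rule someI[where P="\<lambda>n. g n y \<noteq> 0"]) (rule nz)
  then have e: "(SOME n. g n y \<noteq> 0) = n" using nz by (rule dis)
  have "\<exists>n. g n y \<noteq> 0" using nz by blast
  then show ?thesis unfolding glue_def e by simp
qed

lemma glue_val2:
  assumes dis: "\<And>n m y. y \<in> topspace X \<Longrightarrow> g n y \<noteq> 0 \<Longrightarrow> g m y \<noteq> 0 \<Longrightarrow> n = m"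
    and y: "y \<in> topspace X" and nz: "g n y \<noteq> 0"
  shows "glue c g y = c n * g n y"
proof -
  have "\<And>n m. g n y \<noteq> 0 \<Longrightarrow> g m y \<noteq> 0 \<Longrightarrow> n = m" using dis y by blast
  then show ?thesis using nz by (rule glue_val)
qed

lemma glue_zero: "(\<And>n. g n y = 0) \<Longrightarrow> glue c g y = 0"
  unfolding glue_def by simp

lemma glue_neg: "glue (\<lambda>n. - c n) g y = - glue c g y"
  unfolding glue_def by simp
lemma glue_upper:
  fixes g :: "nat \<Rightarrow> 'a \<Rightarrow> real"
  assumes gc: "\<And>n. continuous_map X (top_of_set {0..1}) (g n)"
    and dis: "\<And>n m y. y \<in> topspace X \<Longrightarrow> g n y \<noteq> 0 \<Longrightarrow> g m y \<noteq> 0 \<Longrightarrow> n = m"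
    and cf: "\<And>e. e > 0 \<Longrightarrow> finite {n. e \<le> \<bar>c n\<bar>}"
  shows "openin X {x \<in> topspace X. glue c g x > a}"
proof -
  have g01: "g n x \<in> {0..1}" if "x \<in> topspace X" for n x
    using continuous_map_image_subset_topspace[OF gc[of n]] that by auto
  have ce: "continuous_map X euclideanreal (\<lambda>x. c n * g n x)" for n
    using gc[of n] by (intro continuous_map_real_mult_left) (simp add: continuous_map_in_subtopology)
  have op: "openin X {x \<in> topspace X. c n * g n x > b}" for n b
  proof -
    have "openin X {x \<in> topspace X. c n * g n x \<in> {b<..}}"
      by (rule openin_continuous_map_preimage[OF ce]) simp
    then show ?thesis by simp
  qed
  show ?thesis
  proof (cases "a \<ge> 0")
    case True
    have "{x \<in> topspace X. glue c g x > a} = (\<Union>n. {x \<in> topspace X. c n * g n x > a})"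
    proof (intro set_eqI iffI)
      fix x assume x: "x \<in> {x \<in> topspace X. glue c g x > a}"
      have xt: "x \<in> topspace X" using x by blast
      have "\<exists>n. g n x \<noteq> 0" using x True glue_zero[of g x c] by force
      then obtain n where "g n x \<noteq> 0" by blast
      have "glue c g x = c n * g n x" using dis xt \<open>g n x \<noteq> 0\<close> by (rule glue_val2)
      then show "x \<in> (\<Union>n. {x \<in> topspace X. c n * g n x > a})" using x by auto
    next
      fix x assume "x \<in> (\<Union>n. {x \<in> topspace X. c n * g n x > a})"
      then obtain n where x: "x \<in> topspace X" "c n * g n x > a" by blast
      note xt = x(1)
      have "g n x \<noteq> 0" using True x(2) by auto
      have "glue c g x = c n * g n x" using dis xt \<open>g n x \<noteq> 0\<close> by (rule glue_val2)
      then show "x \<in> {x \<in> topspace X. glue c g x > a}" using x by auto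
    qed
    then show ?thesis using op by (metis (no_types, lifting) openin_Union rangeE)
  next
    case False
    define F where "F = {n. - a \<le> \<bar>c n\<bar>}"
    have fF: "finite F" unfolding F_def using cf False by auto
    have "{x \<in> topspace X. glue c g x > a} = (\<Inter>n\<in>F. {x \<in> topspace X. c n * g n x > a}) \<inter> topspace X"
    proof (intro set_eqI iffI)
      fix x assume x: "x \<in> {x \<in> topspace X. glue c g x > a}"
      have xt: "x \<in> topspace X" using x by blast
      have "c n * g n x > a" if "n \<in> F" for n
      proof (cases "g n x = 0")
        case True then show ?thesis using False by auto
      next
        case False
        have "glue c g x = c n * g n x" using dis xt \<open>g n x \<noteq> 0\<close> by (rule glue_val2)
        then show ?thesis using x by auto
      qed
      then show "x \<in> (\<Inter>n\<in>F. {x \<in> topspace X. c n * g n x > a}) \<inter> topspace X" using x by auto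
    next
      fix x assume x: "x \<in> (\<Inter>n\<in>F. {x \<in> topspace X. c n * g n x > a}) \<inter> topspace X"
      have xt: "x \<in> topspace X" using x by blast
      have "glue c g x > a"
      proof (cases "\<exists>n. g n x \<noteq> 0")
        case True
        then obtain m where m: "g m x \<noteq> 0" by blast
        have e: "glue c g x = c m * g m x" using dis xt \<open>g m x \<noteq> 0\<close> by (rule glue_val2)
        show ?thesis
        proof (cases "m \<in> F")
          case True then show ?thesis using x e by auto
        next
          case mF: False
          then have "\<bar>c m\<bar> < - a" unfolding F_def by auto
          moreover have "\<bar>g m x\<bar> \<le> 1" using g01[of x m] x by auto
          moreover have "\<bar>c m\<bar> * \<bar>g m x\<bar> \<le> \<bar>c m\<bar>"
            using \<open>\<bar>g m x\<bar> \<le> 1\<close> by (simp add: mult_left_le)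
          ultimately have "\<bar>c m * g m x\<bar> < - a"
            by (simp add: abs_mult)
          then show ?thesis using e by linarith
        qed
      next
        case True2: False
        then show ?thesis using glue_zero[of g x c] False by auto
      qed
      then show "x \<in> {x \<in> topspace X. glue c g x > a}" using x by auto
    qed
    then show ?thesis by (simp only:) (rule openin_INT[OF fF], rule op)
  qed
qed

lemma glue_cont:
  fixes g :: "nat \<Rightarrow> 'a \<Rightarrow> real"
  assumes gc: "\<And>n. continuous_map X (top_of_set {0..1}) (g n)"
    and dis: "\<And>n m y. y \<in> topspace X \<Longrightarrow> g n y \<noteq> 0 \<Longrightarrow> g m y \<noteq> 0 \<Longrightarrow> n = m"
    and cb: "\<And>n. \<bar>c n\<bar> \<le> 1"
    and cf: "\<And>e. e > 0 \<Longrightarrow> finite {n. e \<le> \<bar>c n\<bar>}"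
  shows "continuous_map X (top_of_set {-1..1}) (glue c g)"
  unfolding continuous_map_upper_lower_semicontinuous_lt_gen
proof (intro conjI allI ballI)
  fix x assume x: "x \<in> topspace X"
  have xt: "x \<in> topspace X" using x by blast
  have g01: "g n x \<in> {0..1}" for n
    using continuous_map_image_subset_topspace[OF gc[of n]] x by auto
  show "glue c g x \<in> {-1..1}"
  proof (cases "\<exists>n. g n x \<noteq> 0")
    case True
    then obtain m where m: "g m x \<noteq> 0" by blast
    have e: "glue c g x = c m * g m x" using dis xt \<open>g m x \<noteq> 0\<close> by (rule glue_val2)
    have "\<bar>c m * g m x\<bar> \<le> 1" using cb[of m] g01[of m]
      by (simp add: abs_mult mult_le_one)
    then show ?thesis using e by auto
  next
    case False
    then show ?thesis using glue_zero[of g x c] by auto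
  qed
next
  fix a
  show "openin X {x \<in> topspace X. glue c g x > a}"
    by (rule glue_upper[of X g c a, OF gc dis cf])
next
  fix a
  have "openin X {x \<in> topspace X. glue (\<lambda>n. - c n) g x > - a}"
    by (rule glue_upper[of X g "\<lambda>n. - c n" "-a", OF gc dis]) (use cf in auto)
  then show "openin X {x \<in> topspace X. glue c g x < a}"
    by (simp add: glue_neg)
qed


lemma disjoint_seq:
  assumes H: "Hausdorff_space X" and T: "t1_space X" and G: "openin X G" "infinite G"
  shows "\<exists>U::nat \<Rightarrow> 'a set. (\<forall>n. openin X (U n) \<and> U n \<noteq> {} \<and> U n \<subseteq> G) \<and> (\<forall>m n. m \<noteq> n \<longrightarrow> U m \<inter> U n = {})"
proof -
  define P where "P = (\<lambda>(n::nat) (p :: 'a set \<times> 'a set). openin X (fst p) \<and> fst p \<noteq> {} \<and> openin X (snd p) \<and> infinite (snd p) \<and> fst p \<subseteq> G \<and> snd p \<subseteq> G \<and> fst p \<inter> snd p = {})"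
  define Q where "Q = (\<lambda>(n::nat) (p :: 'a set \<times> 'a set) (q :: 'a set \<times> 'a set). fst q \<subseteq> snd p \<and> snd q \<subseteq> snd p)"
  have P0: "\<exists>p. P 0 p"
  proof -
    obtain U W' where "openin X U \<and> U \<noteq> {} \<and> openin X W' \<and> infinite W' \<and> U \<subseteq> G \<and> W' \<subseteq> G \<and> U \<inter> W' = {}"
      using step_split[OF H T G] by (elim exE) (rule that)
    then have "P 0 (U, W')" unfolding P_def by simp
    then show ?thesis by (rule exI)
  qed
  have PS: "\<exists>q. P (Suc n) q \<and> Q n p q" if Pp: "P n p" for p n
  proof -
    have "openin X (snd p)" "infinite (snd p)" using Pp unfolding P_def by auto
    then obtain U W' where UW: "openin X U \<and> U \<noteq> {} \<and> openin X W' \<and> infinite W' \<and> U \<subseteq> snd p \<and> W' \<subseteq> snd p \<and> U \<inter> W' = {}"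
      using step_split[OF H T \<open>openin X (snd p)\<close> \<open>infinite (snd p)\<close>] by (elim exE) (rule that)
    have "snd p \<subseteq> G" using Pp unfolding P_def by auto
    then have "P (Suc n) (U, W') \<and> Q n p (U, W')" using UW unfolding P_def Q_def by auto
    then show ?thesis by (rule exI)
  qed
  have "\<exists>F. \<forall>n. P n (F n) \<and> Q n (F n) (F (Suc n))"
    by (rule dependent_nat_choice[of P Q]) (rule P0, rule PS)
  then obtain F where F: "\<forall>n. P n (F n) \<and> Q n (F n) (F (Suc n))"
    by (elim exE) (rule that)
  define U where "U n = fst (F n)" for n
  define W where "W n = snd (F n)" for n
  have PU: "openin X (U n) \<and> U n \<noteq> {} \<and> U n \<subseteq> G \<and> U n \<inter> W n = {}" for n
    using F unfolding P_def U_def W_def by auto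
  have QU: "U (Suc n) \<subseteq> W n \<and> W (Suc n) \<subseteq> W n" for n
    using F unfolding Q_def U_def W_def by auto
  have "decseq W" using QU by (intro decseq_SucI) blast
  then have decm: "m \<le> n \<Longrightarrow> W n \<subseteq> W m" for m n by (rule decseqD)
  have sub: "U n \<subseteq> W m" if mn: "m < n" for m n
  proof -
    obtain k where k: "n = Suc k" using mn by (cases n) auto
    then have "m \<le> k" using mn by simp
    then show ?thesis using k QU[of k] decm[OF \<open>m \<le> k\<close>] by blast
  qed
  have dj: "U m \<inter> U n = {}" if "m < n" for m n
    using sub[OF that] PU[of m] by blast
  have A: "\<forall>n. openin X (U n) \<and> U n \<noteq> {} \<and> U n \<subseteq> G" using PU by blast
  have B: "\<forall>m n. m \<noteq> n \<longrightarrow> U m \<inter> U n = {}"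
  proof (intro allI impI)
    fix m n :: nat assume "m \<noteq> n"
    then have "m < n \<or> n < m" by arith
    then show "U m \<inter> U n = {}" using dj[of m n] dj[of n m] by blast
  qed
  show ?thesis by (rule exI[where x=U], rule conjI[OF A B])
qed

definition cseq :: "nat \<Rightarrow> real" where
  "cseq n = (if odd n then 1 / real ((n + 1) div 2) else - 1 / real (n div 2))"

lemma cseq_bound1: "\<bar>cseq n\<bar> \<le> 1"
  unfolding cseq_def by (auto simp: divide_le_eq_1)

lemma cseq_bound2: assumes "n \<ge> 1" shows "\<bar>cseq n\<bar> \<le> 2 / real n"
proof (cases "odd n")
  case True
  then obtain k where k: "n = 2 * k + 1" by (metis oddE)
  then have "cseq n = 1 / real (k + 1)" unfolding cseq_def by simp
  moreover have "1 / real (k + 1) \<le> 2 / real (2 * k + 1)" by (simp add: field_simps)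
  ultimately show ?thesis using k by simp
next
  case False
  then obtain k where k: "n = 2 * k" by (metis evenE)
  then have "k \<ge> 1" using assms by simp
  have "cseq n = - 1 / real k" unfolding cseq_def using k by simp
  then show ?thesis using k \<open>k \<ge> 1\<close> by simp
qed

lemma cseq_finite: assumes e: "e > 0" shows "finite {n. e \<le> \<bar>cseq n\<bar>}"
proof (rule finite_subset)
  show "{n. e \<le> \<bar>cseq n\<bar>} \<subseteq> {..nat \<lceil>2 / e\<rceil>}"
  proof
    fix n assume "n \<in> {n. e \<le> \<bar>cseq n\<bar>}"
    then have en: "e \<le> \<bar>cseq n\<bar>" by simp
    show "n \<in> {..nat \<lceil>2 / e\<rceil>}"
    proof (cases "n = 0")
      case True then show ?thesis by simp
    next
      case False
      then have "e \<le> 2 / real n" using en cseq_bound2[of n] by simp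
      then have "real n \<le> 2 / e" using e False by (simp add: field_simps)
      then have "real n \<le> real_of_int \<lceil>2 / e\<rceil>" by (meson le_of_int_ceiling order_trans)
      then show ?thesis by (simp add: le_nat_iff)
    qed
  qed
qed simp

lemma cseq_odd: "k \<ge> 1 \<Longrightarrow> cseq (2 * k - 1) = 1 / real k"
proof -
  assume "k \<ge> 1"
  then obtain j where j: "k = Suc j" by (metis not0_implies_Suc not_one_le_zero)
  have "2 * k - 1 = 2 * j + 1" using j by simp
  then show ?thesis unfolding cseq_def using j by simp
qed

lemma cseq_even: "cseq (2 * k) = - 1 / real k"
  unfolding cseq_def by simp

theorem lemma6p2:
  fixes X :: "'a topology" and G :: "'a set"
  assumes "completely_regular_space X" and "t1_space X"
    and "openin X G" and "infinite G"
  shows "\<exists>(x :: nat \<Rightarrow> 'a) (f :: 'a \<Rightarrow> real).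
           (\<forall>n\<ge>1. x n \<in> G) \<and>
           continuous_map X (subtopology euclideanreal {-1..1}) f \<and>
           {y \<in> topspace X. f y \<noteq> 0} \<subseteq> G \<and>
           (\<forall>k::nat. k \<ge> 1 \<longrightarrow> f (x (2*k - 1)) = 1 / real k \<and> f (x (2*k)) = - 1 / real k)"
proof -
  have H: "Hausdorff_space X"
    by (rule regular_t1_imp_Hausdorff_space[OF completely_regular_imp_regular_space[OF assms(1)] assms(2)])
  obtain U :: "nat \<Rightarrow> 'a set" where UA: "\<forall>n. openin X (U n) \<and> U n \<noteq> {} \<and> U n \<subseteq> G"
    and UB: "\<forall>m n. m \<noteq> n \<longrightarrow> U m \<inter> U n = {}"
    using disjoint_seq[OF H assms(2,3,4)] by (elim exE conjE) (rule that)
  have U: "\<And>n. openin X (U n)" "\<And>n. U n \<noteq> {}" "\<And>n. U n \<subseteq> G" using UA by simp_all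
  have Ud: "\<And>m n. m \<noteq> n \<Longrightarrow> U m \<inter> U n = {}" using UB by simp
  define x where "x n = (SOME p. p \<in> U n)" for n
  have xU: "x n \<in> U n" for n unfolding x_def using U(2)[of n] by (simp add: some_in_eq)
  have UX: "U n \<subseteq> topspace X" for n using U(1) openin_subset by blast
  have "\<exists>h::'a \<Rightarrow> real. continuous_map X (top_of_set {0..1}) h \<and> h (x n) = 0 \<and> h ` (topspace X - U n) \<subseteq> {1}" for n
  proof -
    have cl: "closedin X (topspace X - U n)" using U(1)[of n] by (simp add: closedin_diff)
    have xin: "x n \<in> topspace X - (topspace X - U n)" using xU[of n] UX[of n] by blast
    have CR: "\<forall>S x. closedin X S \<and> x \<in> topspace X - S \<longrightarrow> (\<exists>f::'a\<Rightarrow>real. continuous_map X (top_of_set {0..1}) f \<and> f x = 0 \<and> (f ` S \<subseteq> {1}))"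
      using assms(1) unfolding completely_regular_space_def .
    show ?thesis by (rule mp[OF spec[OF spec[OF CR, of "topspace X - U n"], of "x n"] conjI[OF cl xin]])
  qed
  then have "\<forall>n. \<exists>h::'a \<Rightarrow> real. continuous_map X (top_of_set {0..1}) h \<and> h (x n) = 0 \<and> h ` (topspace X - U n) \<subseteq> {1}"
    by (rule allI)
  from choice[OF this] obtain h :: "nat \<Rightarrow> 'a \<Rightarrow> real" where h0: "\<forall>n. continuous_map X (top_of_set {0..1}) (h n) \<and> h n (x n) = 0 \<and> h n ` (topspace X - U n) \<subseteq> {1}"
    by (elim exE) (rule that)
  have h: "continuous_map X (top_of_set {0..1}) (h n) \<and> h n (x n) = 0 \<and> h n ` (topspace X - U n) \<subseteq> {1}" for n
    using h0 by (rule spec)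
  define g where "g n y = 1 - h n y" for n y
  have gc: "continuous_map X (top_of_set {0..1}) (g n)" for n
  proof -
    have "continuous_map X euclideanreal (h n) \<and> h n \<in> topspace X \<rightarrow> {0..1}"
      using conjunct1[OF h[of n]] unfolding continuous_map_in_subtopology .
    then have hc: "continuous_map X euclideanreal (h n)" and hr: "h n \<in> topspace X \<rightarrow> {0..1}"
      by (rule conjunct1, rule conjunct2)
    have c1: "continuous_map X euclideanreal (\<lambda>y. 1 - h n y)"
      by (rule continuous_map_diff) (simp_all add: hc)
    have c2: "(\<lambda>y. 1 - h n y) \<in> topspace X \<rightarrow> {0..1}" using hr by (auto simp: Pi_iff)
    show ?thesis unfolding g_def[abs_def] continuous_map_in_subtopology using c1 c2 by (rule conjI)
  qed
  have gU: "y \<in> U n" if "y \<in> topspace X" "g n y \<noteq> 0" for n y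
  proof (rule ccontr)
    assume "y \<notin> U n"
    then have "y \<in> topspace X - U n" using that(1) by blast
    moreover have "h n ` (topspace X - U n) \<subseteq> {1}" using h[of n] by (rule conjunct2[OF conjunct2])
    ultimately have "h n y = 1" by (simp add: image_subset_iff)
    then show False using that(2) unfolding g_def by simp
  qed
  have dis: "n = m" if "y \<in> topspace X" "g n y \<noteq> 0" "g m y \<noteq> 0" for n m y
    using gU[OF that(1,2)] gU[OF that(1,3)] Ud[of n m] by blast
  define f where "f = glue cseq g"
  have fc: "continuous_map X (top_of_set {-1..1}) f"
    unfolding f_def by (rule glue_cont[OF gc dis cseq_bound1 cseq_finite])
  have gx: "g n (x n) = 1" for n using h[of n] unfolding g_def by simp
  have xX: "x n \<in> topspace X" for n using xU UX by blast
  have fx: "f (x n) = cseq n" for n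
  proof -
    have "g n (x n) \<noteq> 0" using gx by simp
    then have "f (x n) = cseq n * g n (x n)" unfolding f_def using dis xX[of n] by (intro glue_val2[where X=X]) auto
    then show ?thesis using gx by simp
  qed
  have supp: "{y \<in> topspace X. f y \<noteq> 0} \<subseteq> G"
  proof
    fix y assume y: "y \<in> {y \<in> topspace X. f y \<noteq> 0}"
    have "\<exists>n. g n y \<noteq> 0"
    proof (rule ccontr)
      assume "\<not> (\<exists>n. g n y \<noteq> 0)"
      then have "f y = 0" unfolding f_def by (intro glue_zero) blast
      then show False using y by simp
    qed
    then obtain n where "g n y \<noteq> 0" by blast
    then have "y \<in> U n" using gU y by blast
    then show "y \<in> G" using U(3) by blast
  qed
  show ?thesis
  proof (intro exI[of _ x] exI[of _ f] conjI allI impI)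
    fix n :: nat show "x n \<in> G" using xU U(3) by blast
  next
    show "continuous_map X (top_of_set {-1..1}) f" by (rule fc)
  next
    show "{y \<in> topspace X. f y \<noteq> 0} \<subseteq> G" by (rule supp)
  next
    fix k :: nat assume "k \<ge> 1"
    then show "f (x (2 * k - 1)) = 1 / real k" using fx cseq_odd by simp
  next
    fix k :: nat show "f (x (2 * k)) = - 1 / real k" using fx cseq_even by simp
  qed
qed

end
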